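(* Assume (A1) and (A2). Let $R\ge1$ and $f_*\in\mathcal H_K$ with $\|f_*\|_K\le R$. Then for every $\delta\in(0,1)$, with probability at least $1-\frac\delta2$, $$\mathcal F_{\mathbf z}(f_* )\le\big(C'_1+2\sqrt{c_\tau}\big)\log\frac2\delta\cdot\max\Big\{\frac{R^{q+1}}{m},\ \Big(\frac{R^{2+q-\tau}}{m}\Big)^{\frac{1}{2-\tau}},\ \mathcal A(f_* )\Big\},$$ where $C'_1>0$ is a constant depending only on $q,c_q,\kappa,\|f_\rho^V\|_\infty$ (independent of $m,\delta,R,f_*$).
   Context: Setting. $X$ is a separable metric space, $Y\subseteq\mathbb{R}$, $Z=X\times Y$, and $\rho$ is a Borel probability measure on $Z$. A loss $V:\mathbb{R}\times\mathbb{R}\to[0,\infty)$ is measurable and convex in its second argument; $V'_-(y,a)$ denotes the left derivative of $a\mapsto V(y,a)$. The expected risk is $\mathcal{E}(f)=\int_Z V(y,f(x))\,d\rho(x,y)$, and it is assumed that there is a measurable $f_\rho^V:X\to\mathbb{R}$ minimizing $\mathcal{E}$ over all measurable functions. A sample $\mathbf{z}=\{(x_i,y_i)\}_{i=1}^m$ is drawn i.i.d. from $\rho$, and $\mathcal{E}_{\mathbf z}(f)=\frac1m\sum_{i=1}^m V(y_i,f(x_i))$ is the empirical risk. $K:X\times X\to\mathbb{R}$ is a reproducing kernel with reproducing kernel Hilbert space $(\mathcal{H}_K,\|\cdot\|_K)$, and $B_R=\{f\in\mathcal{H}_K:\|f\|_K\le R\}$. Probabilities are over the draw of $\mathbf z\sim\rho^m$.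 Error quantities: $\mathcal A(f)=\mathcal{E}(f)-\mathcal{E}(f_\rho^V)$; $\mathcal F_{\mathbf z}(f)=\max\{(\mathcal{E}_{\mathbf z}(f)-\mathcal{E}_{\mathbf z}(f_\rho^V))-(\mathcal{E}(f)-\mathcal{E}(f_\rho^V)),0\}$. Assumption (A1): $\kappa:=\sup_{x\in X}\sqrt{K(x,x)}<\infty$, $\|f_\rho^V\|_\infty<\infty$, $|V|_0:=\sup_{y\in Y}V(y,0)<\infty$, and there are $q\ge 0$, $c_q>0$ with $|V'_-(y,a)|\le c_q(1+|a|^q)$ for all $a\in\mathbb{R}$, $y\in Y$. Assumption (A2) (variance condition, with $q$ from (A1)): there are $\tau\in[0,1]$ and $c_\tau>0$ such that for every $R\ge1$ and every $f\in B_R$, $\int_Z\big(V(y,f(x))-V(y,f_\rho^V(x))\big)^2d\rho\le c_\tau R^{2+q-\tau}\big(\mathcal{E}(f)-\mathcal{E}(f_\rho^V)\big)^\tau$. *)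

theory Defs
  imports "HOL-Probability.Probability"
begin

text \<open>Real power with the convention 0 powered 0 equals 1 (Isabelle's powr gives 0 there).\<close>
definition rpow :: "real \<Rightarrow> real \<Rightarrow> real" where
  "rpow x a = (if x = 0 then (if a = 0 then 1 else 0) else x powr a)"

definition left_deriv :: "(real \<Rightarrow> real) \<Rightarrow> real \<Rightarrow> real" where
  "left_deriv g a = Lim (at_right 0) (\<lambda>h. (g a - g (a - h)) / h)"

section \<open>Reproducing kernel Hilbert space (Aronszajn construction, as a space of functions)\<close>

definition kcomb :: "('a \<Rightarrow> 'a \<Rightarrow> real) \<Rightarrow> nat \<Rightarrow> (nat \<Rightarrow> real) \<Rightarrow> (nat \<Rightarrow> 'a) \<Rightarrow> 'a \<Rightarrow> real" where
  "kcomb K n c p = (\<lambda>x. \<Sum>i<n. c i * K (p i) x)"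

definition kinner :: "('a \<Rightarrow> 'a \<Rightarrow> real) \<Rightarrow> nat \<Rightarrow> (nat \<Rightarrow> real) \<Rightarrow> (nat \<Rightarrow> 'a)
    \<Rightarrow> nat \<Rightarrow> (nat \<Rightarrow> real) \<Rightarrow> (nat \<Rightarrow> 'a) \<Rightarrow> real" where
  "kinner K n c p n' d q = (\<Sum>i<n. \<Sum>j<n'. c i * d j * K (p i) (q j))"

definition reproducing_kernel :: "('a \<Rightarrow> 'a \<Rightarrow> real) \<Rightarrow> bool" where
  "reproducing_kernel K \<longleftrightarrow> (\<forall>x y. K x y = K y x) \<and> (\<forall>n c p. kinner K n c p n c p \<ge> 0)"

definition rkhs_approx :: "('a \<Rightarrow> 'a \<Rightarrow> real) \<Rightarrow> ('a \<Rightarrow> real) \<Rightarrow> (nat \<Rightarrow> nat)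
    \<Rightarrow> (nat \<Rightarrow> nat \<Rightarrow> real) \<Rightarrow> (nat \<Rightarrow> nat \<Rightarrow> 'a) \<Rightarrow> bool" where
  "rkhs_approx K f N c p \<longleftrightarrow>
     (\<forall>x. (\<lambda>n. kcomb K (N n) (c n) (p n) x) \<longlonglongrightarrow> f x) \<and>
     (\<forall>e>0. \<exists>M. \<forall>n\<ge>M. \<forall>k\<ge>M.
        kinner K (N n) (c n) (p n) (N n) (c n) (p n)
        - 2 * kinner K (N n) (c n) (p n) (N k) (c k) (p k)
        + kinner K (N k) (c k) (p k) (N k) (c k) (p k) < e)"

definition in_rkhs :: "('a \<Rightarrow> 'a \<Rightarrow> real) \<Rightarrow> ('a \<Rightarrow> real) \<Rightarrow> bool" where
  "in_rkhs K f \<longleftrightarrow> (\<exists>N c p. rkhs_approx K f N c p)"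

text \<open>The RKHS norm: limit of the kernel norms of an approximating sequence
  (independent of the sequence; we take the infimum for definiteness).\<close>
definition rkhs_norm :: "('a \<Rightarrow> 'a \<Rightarrow> real) \<Rightarrow> ('a \<Rightarrow> real) \<Rightarrow> real" where
  "rkhs_norm K f = Inf {l. \<exists>N c p. rkhs_approx K f N c p \<and>
      (\<lambda>n. sqrt (kinner K (N n) (c n) (p n) (N n) (c n) (p n))) \<longlonglongrightarrow> l}"

definition expected_risk :: "('x \<times> real) measure \<Rightarrow> (real \<Rightarrow> real \<Rightarrow> real) \<Rightarrow> ('x \<Rightarrow> real) \<Rightarrow> real" where
  "expected_risk \<rho> V f = (\<integral>z. V (snd z) (f (fst z)) \<partial>\<rho>)"

definition empirical_risk :: "nat \<Rightarrow> (nat \<Rightarrow> 'x \<times> real) \<Rightarrow> (real \<Rightarrow> real \<Rightarrow> real) \<Rightarrow> ('x \<Rightarrow> real) \<Rightarrow> real" where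
  "empirical_risk m z V f = (1 / real m) * (\<Sum>i<m. V (snd (z i)) (f (fst (z i))))"

definition approx_err :: "('x \<times> real) measure \<Rightarrow> (real \<Rightarrow> real \<Rightarrow> real) \<Rightarrow> ('x \<Rightarrow> real) \<Rightarrow> ('x \<Rightarrow> real) \<Rightarrow> real" where
  "approx_err \<rho> V f\<rho> f = expected_risk \<rho> V f - expected_risk \<rho> V f\<rho>"

definition sample_err :: "('x \<times> real) measure \<Rightarrow> (real \<Rightarrow> real \<Rightarrow> real) \<Rightarrow> ('x \<Rightarrow> real)
    \<Rightarrow> nat \<Rightarrow> (nat \<Rightarrow> 'x \<times> real) \<Rightarrow> ('x \<Rightarrow> real) \<Rightarrow> real" where
  "sample_err \<rho> V f\<rho> m z f =
     max ((empirical_risk m z V f - empirical_risk m z V f\<rho>) - (expected_risk \<rho> V f - expected_risk \<rho> V f\<rho>)) 0"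

definition risk_minimizer :: "('x::topological_space \<times> real) measure \<Rightarrow> (real \<Rightarrow> real \<Rightarrow> real) \<Rightarrow> ('x \<Rightarrow> real) \<Rightarrow> bool" where
  "risk_minimizer \<rho> V f\<rho> \<longleftrightarrow> f\<rho> \<in> borel_measurable borel \<and>
     (\<forall>f \<in> borel_measurable borel.
        (\<integral>\<^sup>+z. ennreal (V (snd z) (f\<rho> (fst z))) \<partial>\<rho>) \<le> (\<integral>\<^sup>+z. ennreal (V (snd z) (f (fst z))) \<partial>\<rho>))"

end

theory Submission
  imports Defs
begin


lemma exp_quad_bound:
  fixes u :: real assumes "u \<le> 1/2"
  shows "exp u \<le> 1 + u + 2/3 * u\<^sup>2"
proof -
  obtain t where t: "\<bar>t\<bar> \<le> \<bar>u\<bar>" "exp u = (\<Sum>m<3. (u ^ m) / fact m) + (exp t / fact 3) * u ^ 3"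
    using Maclaurin_exp_le[of u 3] by blast
  have e: "exp u = 1 + u + u\<^sup>2/2 + exp t / 6 * u ^ 3"
    using t(2) by (simp add: numeral_3_eq_3 power2_eq_square fact_numeral)
  show ?thesis
  proof (cases "u \<le> 0")
    case True
    then have "u ^ 3 \<le> 0" by (simp add: power_le_zero_eq)
    then have "exp t / 6 * u ^ 3 \<le> 0" by (simp add: mult_nonneg_nonpos)
    then show ?thesis using e zero_le_power2[of u] by linarith
  next
    case False
    have "exp t \<le> exp (1/2)" using t(1) assms False by simp
    also have "\<dots> \<le> 2" using real_exp_bound_lemma[of "1/2"] by simp
    finally have et: "exp t \<le> 2" .
    have "exp t / 6 * u ^ 3 \<le> 2 / 6 * u ^ 3"
      using et False by (intro mult_right_mono divide_right_mono) auto
    also have "\<dots> = u\<^sup>2 * (u / 3)" by (simp add: power2_eq_square power3_eq_cube)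
    also have "\<dots> \<le> u\<^sup>2 * (1/6)" using assms by (intro mult_left_mono) auto
    finally show ?thesis using e by simp
  qed
qed

lemma quad_pos: "0 \<le> 1 + (u::real) + 2/3 * u\<^sup>2"
proof -
  have "0 \<le> (u + 3/4)\<^sup>2" by simp
  then show ?thesis by (simp add: power2_eq_square algebra_simps)
qed

lemma mgf_bound:
  fixes \<rho> :: "'a measure" and h :: "'a \<Rightarrow> real"
  assumes P: "prob_space \<rho>" and hm: "h \<in> borel_measurable \<rho>"
  and lb: "AE x in \<rho>. l * h x \<le> 1/2"
  and hint: "integrable \<rho> h" "integrable \<rho> (\<lambda>x. (h x)\<^sup>2)"
  and h0: "(\<integral>x. h x \<partial>\<rho>) = 0" and hv: "(\<integral>x. (h x)\<^sup>2 \<partial>\<rho>) \<le> v"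
  shows "(\<integral>\<^sup>+x. ennreal (exp (l * h x)) \<partial>\<rho>) \<le> ennreal (exp (2/3 * l\<^sup>2 * v))"
proof -
  have int2: "integrable \<rho> (\<lambda>x. 1 + l * h x + 2/3 * (l * h x)\<^sup>2)"
  proof -
    interpret prob_space \<rho> by (rule P)
    show ?thesis using hint by (auto simp: power_mult_distrib)
  qed
  have "(\<integral>\<^sup>+x. ennreal (exp (l * h x)) \<partial>\<rho>) \<le> (\<integral>\<^sup>+x. ennreal (1 + l * h x + 2/3 * (l * h x)\<^sup>2) \<partial>\<rho>)"
    using lb
  proof (intro nn_integral_mono_AE, eventually_elim)
    case (elim x)
    show ?case by (rule ennreal_leI, rule exp_quad_bound) (use elim in simp)
  qed
  also have "\<dots> = ennreal (\<integral>x. 1 + l * h x + 2/3 * (l * h x)\<^sup>2 \<partial>\<rho>)"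
    using int2 quad_pos by (intro nn_integral_eq_integral) auto
  also have "(\<integral>x. 1 + l * h x + 2/3 * (l * h x)\<^sup>2 \<partial>\<rho>) = 1 + l * (\<integral>x. h x \<partial>\<rho>) + 2/3 * l\<^sup>2 * (\<integral>x. (h x)\<^sup>2 \<partial>\<rho>)"
  proof -
    interpret prob_space \<rho> by (rule P)
    show ?thesis using hint by (simp add: power_mult_distrib prob_space)
  qed
  also have "\<dots> \<le> 1 + 2/3 * l\<^sup>2 * v" using h0 hv by (simp add: mult_left_mono)
  also have "\<dots> \<le> exp (2/3 * l\<^sup>2 * v)" by (rule exp_ge_add_one_self)
  finally show ?thesis by (simp add: ennreal_leI)
qed

lemma bern_lite:
  fixes \<rho> :: "'a measure" and h :: "'a \<Rightarrow> real"
  assumes P: "prob_space \<rho>" and hm: "h \<in> borel_measurable \<rho>"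
  and lb: "AE x in \<rho>. l * h x \<le> 1/2" and l: "l > 0"
  and hint: "integrable \<rho> h" "integrable \<rho> (\<lambda>x. (h x)\<^sup>2)"
  and h0: "(\<integral>x. h x \<partial>\<rho>) = 0" and hv: "(\<integral>x. (h x)\<^sup>2 \<partial>\<rho>) \<le> v"
  shows "measure (PiM {..<m} (\<lambda>_. \<rho>)) {z \<in> space (PiM {..<m} (\<lambda>_. \<rho>)). a \<le> (\<Sum>i<m. h (z i))}
     \<le> exp (- l * a + real m * (2/3 * l\<^sup>2 * v))"
proof -
  define M where "M = PiM {..<m} (\<lambda>_. \<rho>)"
  interpret Mp: prob_space M unfolding M_def by (intro prob_space_PiM P)
  interpret ps: product_sigma_finite "\<lambda>_. \<rho>"
    using P by (simp add: product_sigma_finite_def prob_space_imp_sigma_finite)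
  have hm': "(\<lambda>z. h (z i)) \<in> borel_measurable M" if "i \<in> {..<m}" for i
    unfolding M_def using that hm by measurable
  have fm: "(\<lambda>z. \<Sum>i<m. h (z i)) \<in> borel_measurable M"
    using hm' by (intro borel_measurable_sum) auto
  have e1: "emeasure M {z \<in> space M. a \<le> (\<Sum>i<m. h (z i))} \<le>
     ennreal (exp (- l * a)) * (\<integral>\<^sup>+x. ennreal (exp (l * (\<Sum>i<m. h (x i)))) * indicator (space M) x \<partial>M)"
    using fm l by (intro Chernoff_ineq_nn_integral_ge) auto
  have "(\<integral>\<^sup>+x. ennreal (exp (l * (\<Sum>i<m. h (x i)))) * indicator (space M) x \<partial>M)
      = (\<integral>\<^sup>+x. (\<Prod>i\<in>{..<m}. ennreal (exp (l * h (x i)))) \<partial>M)"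
    by (intro nn_integral_cong) (simp add: sum_distrib_left exp_sum prod_ennreal)
  also have "\<dots> = (\<Prod>i\<in>{..<m}. (\<integral>\<^sup>+y. ennreal (exp (l * h y)) \<partial>\<rho>))"
    unfolding M_def using hm by (intro ps.product_nn_integral_prod) auto
  also have "\<dots> \<le> (\<Prod>i\<in>{..<m}. ennreal (exp (2/3 * l\<^sup>2 * v)))"
    by (intro prod_mono_ennreal mgf_bound[OF P hm lb hint h0 hv])
  also have "\<dots> = ennreal (exp (real m * (2/3 * l\<^sup>2 * v)))"
  proof -
    have "(\<Prod>i\<in>{..<m}. ennreal (exp (2/3 * l\<^sup>2 * v))) = ennreal (exp (2/3 * l\<^sup>2 * v) ^ m)"
      by (simp add: ennreal_power)
    also have "exp (2/3 * l\<^sup>2 * v) ^ m = exp (real m * (2/3 * l\<^sup>2 * v))"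
      by (rule exp_of_nat_mult[symmetric])
    finally show ?thesis .
  qed
  finally have e2: "(\<integral>\<^sup>+x. ennreal (exp (l * (\<Sum>i<m. h (x i)))) * indicator (space M) x \<partial>M)
     \<le> ennreal (exp (real m * (2/3 * l\<^sup>2 * v)))" .
  have e3: "ennreal (exp (- l * a)) * ennreal (exp (real m * (2/3 * l\<^sup>2 * v)))
      = ennreal (exp (- l * a + real m * (2/3 * l\<^sup>2 * v)))"
  proof -
    have "exp (- l * a) * exp (real m * (2/3 * l\<^sup>2 * v)) = exp (- l * a + real m * (2/3 * l\<^sup>2 * v))"
      by (simp add: exp_add[symmetric])
    then show ?thesis by (metis ennreal_mult exp_ge_zero)
  qed
  have "emeasure M {z \<in> space M. a \<le> (\<Sum>i<m. h (z i))} \<le> ennreal (exp (- l * a + real m * (2/3 * l\<^sup>2 * v)))"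
    using e1 mult_left_mono[OF e2, of "ennreal (exp (- l * a))"] e3 by simp
  then show ?thesis unfolding M_def
    by (simp add: Mp.emeasure_eq_measure[unfolded M_def] ennreal_le_iff)
qed




lemma flipdiv: "(x - y) / (a - b) = (y - x) / (b - (a::real))"
  by (metis minus_diff_eq minus_divide_divide)

lemma ld_tendsto:
  fixes g :: "real \<Rightarrow> real" and a :: real assumes cv: "convex_on UNIV g"
  defines "Q \<equiv> (\<lambda>h. (g a - g (a - h)) / h)"
  shows "(Q \<longlongrightarrow> (SUP h\<in>{0<..}. Q h)) (at_right 0)"
    and "bdd_above (Q ` {0<..})"
    and "left_deriv g a = (SUP h\<in>{0<..}. Q h)"
proof -
  have bd: "Q h \<le> g (a + 1) - g a" if "h > 0" for h
  proof -
    have "(g (a-h) - g a) / ((a-h) - a) \<le> (g (a-h) - g (a+1)) / ((a-h) - (a+1))"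
         "(g (a-h) - g (a+1)) / ((a-h) - (a+1)) \<le> (g a - g (a+1)) / (a - (a+1))"
      using convex_on_slope_le[OF cv, of "a-h" "a+1" a] that by auto
    then show ?thesis unfolding Q_def flipdiv[of "g (a-h)"] by simp
  qed
  show bdd: "bdd_above (Q ` {0<..})" using bd by (intro bdd_aboveI2) auto
  have mono: "Q h2 \<le> Q h1" if "0 < h1" "h1 < h2" for h1 h2
  proof -
    have "(g (a-h2) - g a) / ((a-h2) - a) \<le> (g (a-h1) - g a) / ((a-h1) - a)"
      using convex_on_slope_le(2)[OF cv, of "a-h2" a "a-h1"] that by auto
    then show ?thesis unfolding Q_def flipdiv[of "g (a-h2)"] flipdiv[of "g (a-h1)"] by simp
  qed
  show lim: "(Q \<longlongrightarrow> (SUP h\<in>{0<..}. Q h)) (at_right 0)"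
  proof (rule increasing_tendsto)
    show "\<forall>\<^sub>F n in at_right 0. Q n \<le> (SUP h\<in>{0<..}. Q h)"
      unfolding eventually_at_right_field using bdd
      by (intro exI[of _ 1]) (auto intro: cSUP_upper)
    fix x assume "x < (SUP h\<in>{0<..}. Q h)"
    then obtain h0 where h0: "h0 > 0" "x < Q h0"
      using less_cSUP_iff[OF _ bdd] by auto
    show "\<forall>\<^sub>F n in at_right 0. x < Q n"
      unfolding eventually_at_right_field
    proof (intro exI[of _ h0] conjI allI impI)
      fix y assume "0 < y" "y < h0"
      then show "x < Q y" using mono[of y h0] h0 by linarith
    qed (use h0 in auto)
  qed
  show "left_deriv g a = (SUP h\<in>{0<..}. Q h)"
    unfolding left_deriv_def Q_def[symmetric]
    by (rule tendsto_Lim[OF _ lim]) simp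
qed

lemma ld_slope:
  fixes g :: "real \<Rightarrow> real" assumes cv: "convex_on UNIV g" and ab: "a < b"
  shows "left_deriv g a \<le> (g b - g a) / (b - a)" and "(g b - g a) / (b - a) \<le> left_deriv g b"
proof -
  show "left_deriv g a \<le> (g b - g a) / (b - a)"
    unfolding ld_tendsto(3)[OF cv]
  proof (rule cSUP_least)
    fix h :: real assume "h \<in> {0<..}"
    then have h: "h > 0" by simp
    have "(g (a-h) - g a) / ((a-h) - a) \<le> (g (a-h) - g b) / ((a-h) - b)"
         "(g (a-h) - g b) / ((a-h) - b) \<le> (g a - g b) / (a - b)"
      using convex_on_slope_le[OF cv, of "a-h" b a] h ab by auto
    then show "(g a - g (a - h)) / h \<le> (g b - g a) / (b - a)"
      unfolding flipdiv[of "g (a-h)" "g a"] flipdiv[of "g a" "g b"] by simp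
  qed simp
  have "(g b - g (b - (b - a))) / (b - a) \<le> (SUP h\<in>{0<..}. (g b - g (b - h)) / h)"
    using ab by (intro cSUP_upper ld_tendsto(2)[OF cv]) auto
  then show "(g b - g a) / (b - a) \<le> left_deriv g b"
    unfolding ld_tendsto(3)[OF cv] by simp
qed

lemma conv_lip:
  fixes g :: "real \<Rightarrow> real" assumes cv: "convex_on UNIV g"
  and L: "\<And>a. \<bar>a\<bar> \<le> T \<Longrightarrow> \<bar>left_deriv g a\<bar> \<le> L"
  and a: "\<bar>a\<bar> \<le> T" and b: "\<bar>b\<bar> \<le> T"
  shows "\<bar>g a - g b\<bar> \<le> L * \<bar>a - b\<bar>"
proof -
  have main: "\<bar>g y - g x\<bar> \<le> L * \<bar>y - x\<bar>" if "x < y" "\<bar>x\<bar> \<le> T" "\<bar>y\<bar> \<le> T" for x y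
  proof -
    define s where "s = (g y - g x) / (y - x)"
    have "\<bar>s\<bar> \<le> L" using ld_slope[OF cv that(1)] L[OF that(2)] L[OF that(3)] unfolding s_def
      by linarith
    moreover have "g y - g x = s * (y - x)" using that unfolding s_def by simp
    ultimately show ?thesis using that by (simp add: abs_mult mult_right_mono)
  qed
  show ?thesis
  proof (cases a b rule: linorder_cases)
    case less then show ?thesis using main[OF less a b] by (simp add: abs_minus_commute)
  next
    case greater then show ?thesis using main[OF greater b a] by (simp add: abs_minus_commute)
  qed simp
qed




lemma sum_lessThan_add_split:
  fixes f :: "nat \<Rightarrow> real" and n k :: nat
  shows "(\<Sum>i<n+k. f i) = (\<Sum>i<n. f i) + (\<Sum>j<k. f (n + j))"
  by (induction k) (auto simp: add.assoc)

lemma kinner_sym: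
  assumes "\<forall>x y. K x y = K y x"
  shows "kinner K n' d q n c p = kinner K n c p n' d q"
  unfolding kinner_def using assms
  by (subst sum.swap) (auto intro!: sum.cong simp: mult_ac)

definition kcat :: "nat \<Rightarrow> (nat \<Rightarrow> real) \<Rightarrow> (nat \<Rightarrow> real) \<Rightarrow> real \<Rightarrow> nat \<Rightarrow> real" where
  "kcat n c d t i = (if i < n then c i else t * d (i - n))"
definition pcat :: "nat \<Rightarrow> (nat \<Rightarrow> 'a) \<Rightarrow> (nat \<Rightarrow> 'a) \<Rightarrow> nat \<Rightarrow> 'a" where
  "pcat n p q i = (if i < n then p i else q (i - n))"

lemma kinner_cat_left:
  "kinner K (n+n') (kcat n c d t) (pcat n p q) k e r =
     kinner K n c p k e r + t * kinner K n' d q k e r"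
  unfolding kinner_def sum_lessThan_add_split
  by (simp add: kcat_def pcat_def sum_distrib_left mult_ac)

lemma kinner_cat_right:
  "kinner K k e r (n+n') (kcat n c d t) (pcat n p q) =
     kinner K k e r n c p + t * kinner K k e r n' d q"
  unfolding kinner_def sum_lessThan_add_split
  by (simp add: kcat_def pcat_def sum_distrib_left sum.distrib mult_ac)

lemma quad_disc:
  fixes A B D :: real
  assumes q: "\<And>t. 0 \<le> A + 2 * t * B + t\<^sup>2 * D" and D: "D \<ge> 0"
  shows "B\<^sup>2 \<le> A * D"
proof (cases "D = 0")
  case True
  show ?thesis
  proof (cases "B = 0")
    case False
    have "0 \<le> A + 2 * (-(A+1)/(2*B)) * B + (-(A+1)/(2*B))\<^sup>2 * D" by (rule q)
    with True False show ?thesis by (simp add: field_simps)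
  qed (use True q[of 0] in simp)
next
  case False
  then have Dp: "D > 0" using D by simp
  have "0 \<le> A + 2 * (-B/D) * B + (-B/D)\<^sup>2 * D" by (rule q)
  also have "\<dots> = A - B\<^sup>2 / D" using Dp by (simp add: field_simps power2_eq_square)
  finally show ?thesis using Dp by (simp add: field_simps)
qed

lemma kinner_CS:
  assumes rk: "reproducing_kernel K"
  shows "(kinner K n c p n' d q)\<^sup>2 \<le> kinner K n c p n c p * kinner K n' d q n' d q"
proof (rule quad_disc)
  have sym: "\<forall>x y. K x y = K y x" and psd: "\<And>n c p. kinner K n c p n c p \<ge> 0"
    using rk unfolding reproducing_kernel_def by auto
  show "0 \<le> kinner K n' d q n' d q" by (rule psd)
  fix t
  have "0 \<le> kinner K (n+n') (kcat n c d t) (pcat n p q) (n+n') (kcat n c d t) (pcat n p q)"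
    by (rule psd)
  also have "\<dots> = kinner K n c p n c p + 2 * t * kinner K n c p n' d q + t\<^sup>2 * kinner K n' d q n' d q"
    unfolding kinner_cat_left kinner_cat_right kinner_sym[OF sym, of n' d q n c p]
    by (simp add: algebra_simps power2_eq_square)
  finally show "0 \<le> kinner K n c p n c p + 2 * t * kinner K n c p n' d q + t\<^sup>2 * kinner K n' d q n' d q" .
qed

lemma kcomb_as_kinner: "kcomb K n c p x = kinner K n c p 1 (\<lambda>_. 1) (\<lambda>_. x)"
  unfolding kcomb_def kinner_def by simp

lemma Kxx_as_kinner: "K x x = kinner K 1 (\<lambda>_. 1) (\<lambda>_. x) 1 (\<lambda>_. 1) (\<lambda>_. x)"
  unfolding kinner_def by simp

lemma Kxx_nonneg: "reproducing_kernel K \<Longrightarrow> K x x \<ge> 0"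
  unfolding reproducing_kernel_def Kxx_as_kinner[of K x] by blast

lemma kinner_nonneg: "reproducing_kernel K \<Longrightarrow> kinner K n c p n c p \<ge> 0"
  unfolding reproducing_kernel_def by blast

lemma kcomb_bound:
  assumes rk: "reproducing_kernel K"
  shows "\<bar>kcomb K n c p x\<bar> \<le> sqrt (kinner K n c p n c p) * sqrt (K x x)"
proof -
  have "(kcomb K n c p x)\<^sup>2 \<le> kinner K n c p n c p * K x x"
    unfolding kcomb_as_kinner Kxx_as_kinner[of K x] by (rule kinner_CS[OF rk])
  then have "sqrt ((kcomb K n c p x)\<^sup>2) \<le> sqrt (kinner K n c p n c p * K x x)"
    by (rule real_sqrt_le_mono)
  then show ?thesis by (simp add: real_sqrt_mult)
qed

lemma sqrt_diff_bound:
  fixes A B G :: real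
  assumes "A \<ge> 0" "B \<ge> 0" "G\<^sup>2 \<le> A * B"
  shows "\<bar>sqrt A - sqrt B\<bar> \<le> sqrt (A - 2 * G + B)"
proof -
  have "\<bar>G\<bar> \<le> sqrt (A * B)" using assms real_sqrt_le_mono[OF assms(3)] by simp
  then have G: "G \<le> sqrt A * sqrt B" by (simp add: real_sqrt_mult)
  have "(sqrt A - sqrt B)\<^sup>2 = A - 2 * (sqrt A * sqrt B) + B"
    using assms by (simp add: power2_diff)
  also have "\<dots> \<le> A - 2 * G + B" using G by simp
  finally have "sqrt ((sqrt A - sqrt B)\<^sup>2) \<le> sqrt (A - 2 * G + B)"
    by (rule real_sqrt_le_mono)
  then show ?thesis by simp
qed

lemma rkhs_norm_seq_conv:
  assumes rk: "reproducing_kernel K" and ap: "rkhs_approx K f N c p"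
  shows "convergent (\<lambda>n. sqrt (kinner K (N n) (c n) (p n) (N n) (c n) (p n)))"
proof -
  define A where "A n = kinner K (N n) (c n) (p n) (N n) (c n) (p n)" for n
  have "Cauchy (\<lambda>n. sqrt (A n))"
  proof (rule metric_CauchyI)
    fix e :: real assume e: "e > 0"
    obtain M where M: "\<forall>n\<ge>M. \<forall>k\<ge>M.
        kinner K (N n) (c n) (p n) (N n) (c n) (p n)
        - 2 * kinner K (N n) (c n) (p n) (N k) (c k) (p k)
        + kinner K (N k) (c k) (p k) (N k) (c k) (p k) < e\<^sup>2"
      using ap e unfolding rkhs_approx_def by (meson zero_less_power)
    show "\<exists>M. \<forall>m\<ge>M. \<forall>n\<ge>M. dist (sqrt (A m)) (sqrt (A n)) < e"
    proof (intro exI allI impI)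
      fix m n assume mn: "M \<le> m" "M \<le> n"
      have "\<bar>sqrt (A m) - sqrt (A n)\<bar> \<le> sqrt (A m - 2 * kinner K (N m) (c m) (p m) (N n) (c n) (p n) + A n)"
        unfolding A_def by (intro sqrt_diff_bound kinner_nonneg[OF rk] kinner_CS[OF rk])
      also have "\<dots> < sqrt (e\<^sup>2)" using M mn unfolding A_def by (intro real_sqrt_less_mono) auto
      also have "\<dots> = e" using e by simp
      finally show "dist (sqrt (A m)) (sqrt (A n)) < e" by (simp add: dist_real_def)
    qed
  qed
  then show ?thesis unfolding A_def by (simp add: Cauchy_convergent_iff)
qed

lemma rkhs_point_bound:
  assumes rk: "reproducing_kernel K" and f: "in_rkhs K f"
  shows "\<bar>f x\<bar> \<le> sqrt (K x x) * rkhs_norm K f"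
proof -
  define S where "S = {l. \<exists>N c p. rkhs_approx K f N c p \<and>
      (\<lambda>n. sqrt (kinner K (N n) (c n) (p n) (N n) (c n) (p n))) \<longlonglongrightarrow> l}"
  have bnd: "\<bar>f x\<bar> \<le> sqrt (K x x) * l" if lS': "l \<in> S" for l
  proof -
    obtain N c p where ap: "rkhs_approx K f N c p"
      and lim: "(\<lambda>n. sqrt (kinner K (N n) (c n) (p n) (N n) (c n) (p n))) \<longlonglongrightarrow> l"
      using lS' unfolding S_def by blast
    have l1: "(\<lambda>n. \<bar>kcomb K (N n) (c n) (p n) x\<bar>) \<longlonglongrightarrow> \<bar>f x\<bar>"
      using ap unfolding rkhs_approx_def by (intro tendsto_rabs) auto
    have l2: "(\<lambda>n. sqrt (kinner K (N n) (c n) (p n) (N n) (c n) (p n)) * sqrt (K x x)) \<longlonglongrightarrow> l * sqrt (K x x)"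
      by (intro tendsto_mult lim tendsto_const)
    have "\<bar>f x\<bar> \<le> l * sqrt (K x x)"
      by (rule LIMSEQ_le[OF l1 l2]) (auto intro: kcomb_bound[OF rk])
    then show ?thesis by (simp add: mult.commute)
  qed
  obtain N c p where ap: "rkhs_approx K f N c p" using f unfolding in_rkhs_def by blast
  obtain l where "(\<lambda>n. sqrt (kinner K (N n) (c n) (p n) (N n) (c n) (p n))) \<longlonglongrightarrow> l"
    using rkhs_norm_seq_conv[OF rk ap] unfolding convergent_def by blast
  with ap have lS: "l \<in> S" unfolding S_def by blast
  have nrm: "rkhs_norm K f = Inf S" unfolding rkhs_norm_def S_def by simp
  show ?thesis
  proof (cases "K x x = 0")
    case True then show ?thesis using bnd[OF lS] by simp
  next
    case False
    then have kp: "sqrt (K x x) > 0" using Kxx_nonneg[OF rk, of x] by simp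
    have "\<bar>f x\<bar> / sqrt (K x x) \<le> Inf S"
    proof (rule cInf_greatest)
      show "S \<noteq> {}" using lS by blast
      fix l assume "l \<in> S"
      then show "\<bar>f x\<bar> / sqrt (K x x) \<le> l" using bnd kp by (simp add: divide_le_eq mult.commute)
    qed
    then show ?thesis unfolding nrm using kp by (simp add: divide_le_eq mult.commute)
  qed
qed




lemma V_comp_meas:
  fixes V :: "real \<Rightarrow> real \<Rightarrow> real" and u w :: "'c \<Rightarrow> real"
  assumes V: "(\<lambda>(y, a). V y a) \<in> borel_measurable borel"
  and u: "u \<in> borel_measurable M" and w: "w \<in> borel_measurable M"
  shows "(\<lambda>x. V (u x) (w x) :: real) \<in> borel_measurable M"
proof -
  have "(\<lambda>x. (u x, w x)) \<in> measurable M (borel \<Otimes>\<^sub>M borel)"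
    using u w by (rule measurable_Pair)
  then have p: "(\<lambda>x. (u x, w x)) \<in> measurable M (borel :: (real \<times> real) measure)"
    by (simp add: borel_prod)
  have "(\<lambda>x. (\<lambda>(y, a). V y a) (u x, w x)) \<in> borel_measurable M"
    by (rule measurable_compose[OF p V])
  then show ?thesis by simp
qed

lemma fst_meas:
  assumes "sets \<rho> = sets (borel :: ('x::second_countable_topology \<times> real) measure)"
  shows "fst \<in> measurable \<rho> (borel :: 'x measure)" "snd \<in> borel_measurable \<rho>"
proof -
  have "fst \<in> measurable ((borel :: 'x measure) \<Otimes>\<^sub>M (borel :: real measure)) (borel :: 'x measure)" by (rule measurable_fst)
  then show "fst \<in> measurable \<rho> (borel :: 'x measure)"
    by (subst measurable_cong_sets[OF assms refl]) (metis borel_prod)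
  have "snd \<in> measurable ((borel :: 'x measure) \<Otimes>\<^sub>M (borel :: real measure)) (borel :: real measure)" by (rule measurable_snd)
  then show "snd \<in> borel_measurable \<rho>"
    by (subst measurable_cong_sets[OF assms refl]) (metis borel_prod)
qed

lemma rkhs_meas:
  assumes "\<forall>x. K x \<in> borel_measurable borel" and "in_rkhs K f"
  shows "f \<in> borel_measurable borel"
proof -
  obtain N c p where ap: "rkhs_approx K f N c p" using assms(2) unfolding in_rkhs_def by blast
  show ?thesis
  proof (rule borel_measurable_LIMSEQ_real)
    show "(\<lambda>i. kcomb K (N i) (c i) (p i) x) \<longlonglongrightarrow> f x" for x
      using ap unfolding rkhs_approx_def by auto
    have [measurable]: "\<And>y. K y \<in> borel_measurable borel" using assms(1) by blast
    show "kcomb K (N i) (c i) (p i) \<in> borel_measurable borel" for i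
      unfolding kcomb_def by measurable
  qed
qed




definition C0 :: "real \<Rightarrow> real \<Rightarrow> real \<Rightarrow> real \<Rightarrow> real" where
  "C0 q cq \<kappa> B = 2 * (\<bar>cq\<bar> + 1) * (1 + \<bar>\<kappa>\<bar> + \<bar>B\<bar>) powr q * (1 + \<bar>\<kappa>\<bar> + \<bar>B\<bar>)"

lemma C0_pos: "C0 q cq \<kappa> B > 0"
proof -
  have "1 + \<bar>\<kappa>\<bar> + \<bar>B\<bar> > 0" by simp
  then show ?thesis unfolding C0_def by (intro mult_pos_pos) auto
qed

lemma rpow_le_powr:
  assumes "\<bar>a\<bar> \<le> T" "q \<ge> 0"
  shows "rpow \<bar>a\<bar> q \<le> (1 + T) powr q"
proof (cases "\<bar>a\<bar> = 0")
  case True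
  have "1 + T > 0" using assms by linarith
  with True show ?thesis unfolding rpow_def
    using ge_one_powr_ge_zero[of "1+T" q] assms by (auto simp: powr_nonneg_iff)
next
  case False
  then have "rpow \<bar>a\<bar> q = \<bar>a\<bar> powr q" unfolding rpow_def by simp
  also have "\<dots> \<le> (1 + T) powr q" using assms by (intro powr_mono2) auto
  finally show ?thesis .
qed

lemma main_core:
  fixes \<rho> :: "('x::{metric_space,second_countable_topology} \<times> real) measure"
    and Y :: "real set" and V :: "real \<Rightarrow> real \<Rightarrow> real" and K :: "'x \<Rightarrow> 'x \<Rightarrow> real"
    and f\<rho> fs :: "'x \<Rightarrow> real" and m :: nat
  assumes P: "prob_space \<rho>" and sets: "sets \<rho> = sets borel" and AEY: "AE z in \<rho>. snd z \<in> Y"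
   and Vm: "(\<lambda>(y, a). V y a) \<in> borel_measurable borel" and Vnn: "\<forall>y a. V y a \<ge> 0"
   and cv: "\<forall>y. convex_on UNIV (V y)" and rm: "risk_minimizer \<rho> V f\<rho>"
   and rk: "reproducing_kernel K" and Km: "\<forall>x. K x \<in> borel_measurable borel"
   and Kb: "\<exists>b. \<forall>x. K x x \<le> b" and fb: "\<exists>b. \<forall>x. \<bar>f\<rho> x\<bar> \<le> b" and V0: "\<exists>b. \<forall>y\<in>Y. V y 0 \<le> b"
   and q: "q \<ge> 0" and cq: "cq > 0"
   and dV: "\<forall>a. \<forall>y\<in>Y. \<bar>left_deriv (V y) a\<bar> \<le> cq * (1 + rpow \<bar>a\<bar> q)"
   and tau: "0 \<le> \<tau>" "\<tau> \<le> 1" "c\<tau> > 0"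
   and A2: "\<forall>R'\<ge>1. \<forall>f. in_rkhs K f \<and> rkhs_norm K f \<le> R' \<longrightarrow>
         (\<integral>z. (V (snd z) (f (fst z)) - V (snd z) (f\<rho> (fst z)))\<^sup>2 \<partial>\<rho>)
           \<le> c\<tau> * R' powr (2 + q - \<tau>) * rpow (approx_err \<rho> V f\<rho> f) \<tau>"
   and R: "R \<ge> 1" and fsr: "in_rkhs K fs" and fsn: "rkhs_norm K fs \<le> R" and m: "m > 0"
   and \<delta>: "0 < \<delta>" "\<delta> < 1"
  shows "measure (PiM {..<m} (\<lambda>_. \<rho>))
        {z \<in> space (PiM {..<m} (\<lambda>_. \<rho>)).
           sample_err \<rho> V f\<rho> m z fs
           \<le> (8 * C0 q cq (SUP x. sqrt (K x x)) (SUP x. \<bar>f\<rho> x\<bar>) + 2 * sqrt c\<tau>) * ln (2 / \<delta>) *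
              Max {R powr (q + 1) / real m,
                   (R powr (2 + q - \<tau>) / real m) powr (1 / (2 - \<tau>)),
                   approx_err \<rho> V f\<rho> fs}}
      \<ge> 1 - \<delta> / 2"
proof -
  interpret prob_space \<rho> by (rule P)
  define \<kappa> where "\<kappa> = (SUP x. sqrt (K x x))"
  define B where "B = (SUP x. \<bar>f\<rho> x\<bar>)"
  obtain bK where bK: "\<forall>x. K x x \<le> bK" using Kb by blast
  have bddK: "bdd_above (range (\<lambda>x. sqrt (K x x)))"
    using bK by (intro bdd_aboveI2[of _ _ "sqrt bK"]) (auto intro: real_sqrt_le_mono)
  have kx: "sqrt (K x x) \<le> \<kappa>" for x unfolding \<kappa>_def by (rule cSUP_upper[OF _ bddK]) simp
  have \<kappa>0: "\<kappa> \<ge> 0" using kx[of undefined] Kxx_nonneg[OF rk, of undefined] by (meson order_trans real_sqrt_ge_zero)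
  obtain bf where bf: "\<forall>x. \<bar>f\<rho> x\<bar> \<le> bf" using fb by blast
  have bddf: "bdd_above (range (\<lambda>x. \<bar>f\<rho> x\<bar>))"
    using bf by (intro bdd_aboveI2[of _ _ bf]) auto
  have frb: "\<bar>f\<rho> x\<bar> \<le> B" for x unfolding B_def by (rule cSUP_upper[OF _ bddf]) simp
  have B0: "B \<ge> 0" using frb[of undefined] by linarith
  have fsb: "\<bar>fs x\<bar> \<le> \<kappa> * R" for x
  proof -
    have "\<bar>fs x\<bar> \<le> sqrt (K x x) * rkhs_norm K fs" by (rule rkhs_point_bound[OF rk fsr])
    also have "\<dots> \<le> sqrt (K x x) * R" using fsn Kxx_nonneg[OF rk, of x] by (intro mult_left_mono) auto
    also have "\<dots> \<le> \<kappa> * R" using kx[of x] R by (intro mult_right_mono) auto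
    finally show ?thesis .
  qed
  define T where "T = \<kappa> * R + B"
  have T0: "T \<ge> 0" unfolding T_def using \<kappa>0 B0 R by simp
  define L where "L = 2 * cq * (1 + T) powr q"
  have L0: "L \<ge> 0" unfolding L_def using cq by simp
  have ldb: "\<bar>left_deriv (V y) a\<bar> \<le> L" if "y \<in> Y" "\<bar>a\<bar> \<le> T" for y a
  proof -
    have "\<bar>left_deriv (V y) a\<bar> \<le> cq * (1 + rpow \<bar>a\<bar> q)" using dV that by blast
    also have "\<dots> \<le> cq * ((1 + T) powr q + (1 + T) powr q)"
      using rpow_le_powr[OF that(2) q] ge_one_powr_ge_zero[of "1+T" q] T0 q cq
      by (intro mult_left_mono add_mono) auto
    finally show ?thesis unfolding L_def by simp
  qed
  have lip: "\<bar>V y a - V y b\<bar> \<le> L * \<bar>a - b\<bar>" if "y \<in> Y" "\<bar>a\<bar> \<le> T" "\<bar>b\<bar> \<le> T" for y a b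
    using conv_lip[of "V y" T L a b] cv ldb that by blast
  have fsT: "\<bar>fs x\<bar> \<le> T" for x using fsb[of x] B0 unfolding T_def by linarith
  have frT: "\<bar>f\<rho> x\<bar> \<le> T" for x using frb[of x] \<kappa>0 R unfolding T_def
    by (smt (verit) mult_nonneg_nonneg)
  define g where "g z = V (snd z) (fs (fst z)) - V (snd z) (f\<rho> (fst z))" for z
  define Mb where "Mb = L * T"
  have gb: "AE z in \<rho>. \<bar>g z\<bar> \<le> Mb"
    using AEY
  proof eventually_elim
    case (elim z)
    have "\<bar>g z\<bar> \<le> L * \<bar>fs (fst z) - f\<rho> (fst z)\<bar>"
      unfolding g_def by (rule lip[OF elim fsT frT])
    also have "\<dots> \<le> L * T" using fsb[of "fst z"] frb[of "fst z"] L0 unfolding T_def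
      by (intro mult_left_mono) auto
    finally show ?case unfolding Mb_def .
  qed
  have fsm: "fs \<in> borel_measurable borel" by (rule rkhs_meas[OF Km fsr])
  have frm: "f\<rho> \<in> borel_measurable borel" using rm unfolding risk_minimizer_def by blast
  note fstm = fst_meas(1)[OF sets] and sndm = fst_meas(2)[OF sets]
  have V1m: "(\<lambda>z. V (snd z) (fs (fst z))) \<in> borel_measurable \<rho>"
    by (rule V_comp_meas[OF Vm sndm measurable_compose[OF fstm fsm]])
  have V2m: "(\<lambda>z. V (snd z) (f\<rho> (fst z))) \<in> borel_measurable \<rho>"
    by (rule V_comp_meas[OF Vm sndm measurable_compose[OF fstm frm]])
  have gm: "g \<in> borel_measurable \<rho>" unfolding g_def using V1m V2m by (rule borel_measurable_diff)
  obtain bV where bV: "\<forall>y\<in>Y. V y 0 \<le> bV" using V0 by blast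
  have Vb: "\<bar>V y a\<bar> \<le> bV + L * T" if "y \<in> Y" "\<bar>a\<bar> \<le> T" for y a
  proof -
    have "V y a \<le> V y 0 + \<bar>V y a - V y 0\<bar>" by simp
    also have "\<dots> \<le> bV + L * \<bar>a - 0\<bar>" using bV that lip[of y a 0] T0 by (intro add_mono) auto
    also have "\<dots> \<le> bV + L * T" using that L0 by (simp add: mult_left_mono)
    finally show ?thesis using Vnn by simp
  qed
  have int1: "integrable \<rho> (\<lambda>z. V (snd z) (fs (fst z)))"
    by (rule integrable_const_bound[where B="bV + L * T"])
       (use AEY Vb fsT V1m in \<open>auto elim!: eventually_mono\<close>)
  have int2: "integrable \<rho> (\<lambda>z. V (snd z) (f\<rho> (fst z)))"
    by (rule integrable_const_bound[where B="bV + L * T"])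
       (use AEY Vb frT V2m in \<open>auto elim!: eventually_mono\<close>)
  have intg: "integrable \<rho> g" unfolding g_def using int1 int2 by (rule Bochner_Integration.integrable_diff)
  have g2b: "AE z in \<rho>. \<bar>(g z)\<^sup>2\<bar> \<le> Mb\<^sup>2"
    using gb by eventually_elim (metis abs_ge_zero abs_power2 power2_abs power_mono)
  have intg2: "integrable \<rho> (\<lambda>z. (g z)\<^sup>2)"
    by (rule integrable_const_bound[where B="Mb\<^sup>2"]) (use g2b gm in auto)
  define \<mu> where "\<mu> = approx_err \<rho> V f\<rho> fs"
  have \<mu>g: "\<mu> = (\<integral>z. g z \<partial>\<rho>)"
    unfolding \<mu>_def approx_err_def expected_risk_def g_def using int1 int2 by simp
  have \<mu>0: "\<mu> \<ge> 0"
  proof -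
    have "(\<integral>\<^sup>+z. ennreal (V (snd z) (f\<rho> (fst z))) \<partial>\<rho>) \<le> (\<integral>\<^sup>+z. ennreal (V (snd z) (fs (fst z))) \<partial>\<rho>)"
      using rm fsm unfolding risk_minimizer_def by blast
    also have "(\<integral>\<^sup>+z. ennreal (V (snd z) (fs (fst z))) \<partial>\<rho>) = ennreal (\<integral>z. V (snd z) (fs (fst z)) \<partial>\<rho>)"
      using int1 Vnn by (intro nn_integral_eq_integral) auto
    also have "(\<integral>\<^sup>+z. ennreal (V (snd z) (f\<rho> (fst z))) \<partial>\<rho>) = ennreal (\<integral>z. V (snd z) (f\<rho> (fst z)) \<partial>\<rho>)"
      using int2 Vnn by (intro nn_integral_eq_integral) auto
    finally have "(\<integral>z. V (snd z) (f\<rho> (fst z)) \<partial>\<rho>) \<le> (\<integral>z. V (snd z) (fs (fst z)) \<partial>\<rho>)"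
      using Vnn by (subst (asm) ennreal_le_iff) (auto intro: integral_nonneg_AE)
    then show ?thesis unfolding \<mu>_def approx_err_def expected_risk_def by simp
  qed
  define v where "v = (\<integral>z. (g z)\<^sup>2 \<partial>\<rho>)"
  have v0: "v \<ge> 0" unfolding v_def by (rule integral_nonneg_AE) auto
  have vA2: "v \<le> c\<tau> * R powr (2 + q - \<tau>) * rpow \<mu> \<tau>"
    using A2 R fsr fsn unfolding v_def g_def \<mu>_def by blast
  define h where "h z = g z - \<mu>" for z
  have hm: "h \<in> borel_measurable \<rho>" unfolding h_def using gm by simp
  have inth: "integrable \<rho> h" unfolding h_def using intg by simp
  have h0: "(\<integral>z. h z \<partial>\<rho>) = 0" unfolding h_def using intg \<mu>g by (simp add: prob_space)
  have inth2: "integrable \<rho> (\<lambda>z. (h z)\<^sup>2)"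
    unfolding h_def power2_diff using intg intg2 by simp
  have hv: "(\<integral>z. (h z)\<^sup>2 \<partial>\<rho>) \<le> v"
  proof -
    have "(\<integral>z. (h z)\<^sup>2 \<partial>\<rho>) = (\<integral>z. (g z)\<^sup>2 + \<mu>\<^sup>2 - 2 * \<mu> * g z \<partial>\<rho>)"
      unfolding h_def power2_diff by (simp add: mult_ac)
    also have "\<dots> = v + \<mu>\<^sup>2 - 2 * \<mu> * \<mu>"
      using intg intg2 \<mu>g unfolding v_def by (simp add: prob_space)
    also have "\<dots> \<le> v" by (simp add: power2_eq_square)
    finally show ?thesis .
  qed
  have \<mu>le: "\<mu> \<le> Mb" unfolding \<mu>g using intg gb by (intro integral_le_const) (auto elim!: eventually_mono)
  define c0 where "c0 = C0 q cq \<kappa> B"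
  have c0p: "c0 > 0" unfolding c0_def by (rule C0_pos)
  have Mbc: "Mb \<le> c0 * R powr (q + 1)"
  proof -
    define D where "D = 1 + \<kappa> + B"
    have D1: "D \<ge> 1" unfolding D_def using \<kappa>0 B0 by simp
    have TD: "1 + T \<le> R * D" unfolding T_def D_def using R \<kappa>0 B0 mult_left_mono[of 1 R B]
      by (simp add: algebra_simps)
    have TD2: "T \<le> R * D" using TD by simp
    have "(1 + T) powr q \<le> (R * D) powr q" using TD T0 q by (intro powr_mono2) auto
    also have "\<dots> = R powr q * D powr q" using R D1 by (simp add: powr_mult)
    finally have p1: "(1 + T) powr q \<le> R powr q * D powr q" .
    have "Mb = 2 * cq * (1 + T) powr q * T" unfolding Mb_def L_def by simp
    also have "\<dots> \<le> 2 * (\<bar>cq\<bar> + 1) * (R powr q * D powr q) * (R * D)"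
      using cq p1 TD2 T0 by (intro mult_mono) auto
    also have "\<dots> = c0 * (R powr q * R)"
      unfolding c0_def C0_def D_def using \<kappa>0 B0 by (simp add: mult_ac)
    also have "R powr q * R = R powr (q + 1)" using R by (simp add: powr_add)
    finally show ?thesis .
  qed
  define bb where "bb = 2 * c0 * R powr (q + 1)"
  have bbp: "bb > 0" unfolding bb_def using c0p R by simp
  have hb: "AE z in \<rho>. h z \<le> bb"
    using gb
  proof eventually_elim
    case (elim z)
    then show ?case unfolding h_def bb_def using \<mu>0 \<mu>le Mbc by simp
  qed
  define \<epsilon> where "\<epsilon> = ln (2 / \<delta>)"
  have \<epsilon>23: "\<epsilon> \<ge> 2/3"
  proof -
    have "ln 2 \<le> ln (2 / \<delta>)" using \<delta> by (subst ln_le_cancel_iff) (auto simp: field_simps)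
    then show ?thesis unfolding \<epsilon>_def using ln2_ge_two_thirds by linarith
  qed
  have exp\<epsilon>: "exp (- \<epsilon>) = \<delta> / 2"
  proof -
    have "exp (- \<epsilon>) = inverse (exp \<epsilon>)" by (simp add: exp_minus)
    also have "exp \<epsilon> = 2 / \<delta>" unfolding \<epsilon>_def using \<delta> by simp
    finally show ?thesis by simp
  qed
  define t where "t = 2 * sqrt (2/3 * v * \<epsilon> / m) + 4 * bb * \<epsilon> / m"
  have mp: "real m > 0" using m by simp
  have sq0: "0 \<le> 2/3 * v * \<epsilon> / m" using v0 \<epsilon>23 mp by simp
  have t4: "4 * bb * \<epsilon> / m \<le> t" unfolding t_def using sq0 by simp
  have pos4: "4 * bb * \<epsilon> / m > 0" using bbp \<epsilon>23 mp by simp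
  then have tp: "t > 0" using t4 by linarith
  have t2: "8/3 * v * \<epsilon> / m \<le> t\<^sup>2"
  proof -
    have st: "2 * sqrt (2/3 * v * \<epsilon> / m) \<le> t" using t_def pos4 by linarith
    have sqp: "0 \<le> 2 * sqrt (2/3 * v * \<epsilon> / m)" using sq0 by simp
    have "(2 * sqrt (2/3 * v * \<epsilon> / m))\<^sup>2 \<le> t\<^sup>2" using st sqp by (intro power_mono) auto
    moreover have "(2 * sqrt (2/3 * v * \<epsilon> / m))\<^sup>2 = 8/3 * v * \<epsilon> / m"
      using v0 \<epsilon>23 mp by (simp add: power_mult_distrib)
    ultimately show ?thesis by simp
  qed
  define l where "l = 2 * \<epsilon> / (m * t)"
  have lp: "l > 0" unfolding l_def using \<epsilon>23 mp tp by simp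
  have lbb: "l * bb \<le> 1/2"
  proof -
    have "l * bb = 2 * \<epsilon> * bb / (m * t)" unfolding l_def by simp
    also have "\<dots> \<le> 1/2" using t4 mp tp by (simp add: field_simps)
    finally show ?thesis .
  qed
  have lb: "AE z in \<rho>. l * h z \<le> 1/2"
    using hb by eventually_elim (use lp lbb in \<open>smt (verit) mult_left_mono\<close>)
  have bern: "measure (PiM {..<m} (\<lambda>_. \<rho>)) {z \<in> space (PiM {..<m} (\<lambda>_. \<rho>)). m * t \<le> (\<Sum>i<m. h (z i))}
     \<le> exp (- l * (m * t) + real m * (2/3 * l\<^sup>2 * v))"
    by (rule bern_lite[OF P hm lb lp inth inth2 h0 hv])
  have expo: "- l * (m * t) + real m * (2/3 * l\<^sup>2 * v) \<le> - \<epsilon>"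
  proof -
    have e1: "- l * (m * t) = - 2 * \<epsilon>" unfolding l_def using mp tp by simp
    have e2: "real m * (2/3 * l\<^sup>2 * v) = (8/3 * v * \<epsilon> / m) * \<epsilon> / t\<^sup>2"
      unfolding l_def using mp tp by (simp add: field_simps power2_eq_square)
    have "(8/3 * v * \<epsilon> / m) * \<epsilon> / t\<^sup>2 \<le> t\<^sup>2 * \<epsilon> / t\<^sup>2"
      using t2 \<epsilon>23 tp by (intro divide_right_mono mult_right_mono) auto
    also have "\<dots> = \<epsilon>" using tp by simp
    finally show ?thesis using e1 e2 by linarith
  qed
  have badP: "measure (PiM {..<m} (\<lambda>_. \<rho>)) {z \<in> space (PiM {..<m} (\<lambda>_. \<rho>)). m * t \<le> (\<Sum>i<m. h (z i))}
     \<le> \<delta> / 2"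
    using bern expo exp\<epsilon> by (smt (verit) exp_le_cancel_iff)
  define W where "W = Max {R powr (q + 1) / real m,
                   (R powr (2 + q - \<tau>) / real m) powr (1 / (2 - \<tau>)),
                   approx_err \<rho> V f\<rho> fs}"
  have W1: "R powr (q + 1) / real m \<le> W" unfolding W_def by (rule Max_ge) auto
  have W2: "(R powr (2 + q - \<tau>) / real m) powr (1 / (2 - \<tau>)) \<le> W" unfolding W_def by (rule Max_ge) auto
  have W3: "\<mu> \<le> W" unfolding W_def \<mu>_def by (rule Max_ge) auto
  have Wp: "W > 0" using W1 R mp by (smt (verit) divide_pos_pos powr_gt_zero)
  have a2W: "R powr (2 + q - \<tau>) / real m \<le> W powr (2 - \<tau>)"
  proof -
    define a where "a = R powr (2 + q - \<tau>) / real m"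
    have ap: "a > 0" unfolding a_def using R mp by simp
    have "a = (a powr (1 / (2 - \<tau>))) powr (2 - \<tau>)"
      using ap tau by (simp add: powr_powr powr_one)
    also have "\<dots> \<le> W powr (2 - \<tau>)" using W2 tau unfolding a_def by (intro powr_mono2) auto
    finally show ?thesis unfolding a_def .
  qed
  have rW: "rpow \<mu> \<tau> \<le> W powr \<tau>"
  proof (cases "\<mu> = 0")
    case True then show ?thesis using Wp unfolding rpow_def by auto
  next
    case False
    then have "rpow \<mu> \<tau> = \<mu> powr \<tau>" unfolding rpow_def by simp
    also have "\<dots> \<le> W powr \<tau>" using W3 \<mu>0 tau by (intro powr_mono2) auto
    finally show ?thesis .
  qed
  have r0: "rpow \<mu> \<tau> \<ge> 0" unfolding rpow_def by auto
  have vm: "v / m \<le> c\<tau> * W\<^sup>2"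
  proof -
    have "v / m \<le> (c\<tau> * R powr (2 + q - \<tau>) * rpow \<mu> \<tau>) / m" using vA2 mp by (simp add: divide_right_mono)
    also have "\<dots> = c\<tau> * ((R powr (2 + q - \<tau>) / real m) * rpow \<mu> \<tau>)" by simp
    also have "\<dots> \<le> c\<tau> * (W powr (2 - \<tau>) * W powr \<tau>)"
      using a2W rW r0 tau by (intro mult_left_mono mult_mono) auto
    also have "W powr (2 - \<tau>) * W powr \<tau> = W\<^sup>2" using Wp by (simp add: powr_add[symmetric])
    finally show ?thesis .
  qed
  have sqb: "2 * sqrt (2/3 * v * \<epsilon> / m) \<le> 2 * sqrt c\<tau> * \<epsilon> * W"
  proof -
    have "2/3 * v * \<epsilon> / m = (2/3 * \<epsilon>) * (v / m)" by simp
    also have "\<dots> \<le> \<epsilon>\<^sup>2 * (c\<tau> * W\<^sup>2)"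
      using vm \<epsilon>23 v0 mp by (intro mult_mono) (auto simp: power2_eq_square)
    finally have "sqrt (2/3 * v * \<epsilon> / m) \<le> sqrt (\<epsilon>\<^sup>2 * (c\<tau> * W\<^sup>2))" by (rule real_sqrt_le_mono)
    also have "\<dots> = \<epsilon> * sqrt c\<tau> * W" using \<epsilon>23 Wp by (simp add: real_sqrt_mult)
    finally show ?thesis by (simp add: mult_ac)
  qed
  have lin: "4 * bb * \<epsilon> / m \<le> 8 * c0 * \<epsilon> * W"
  proof -
    have "4 * bb * \<epsilon> / m = 8 * c0 * \<epsilon> * (R powr (q + 1) / real m)" unfolding bb_def by simp
    also have "\<dots> \<le> 8 * c0 * \<epsilon> * W" using W1 c0p \<epsilon>23 by (intro mult_left_mono) auto
    finally show ?thesis .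
  qed
  define Tb where "Tb = (8 * c0 + 2 * sqrt c\<tau>) * \<epsilon> * W"
  have tTb: "t \<le> Tb" unfolding Tb_def t_def using sqb lin by (simp add: algebra_simps)
  define F where "F z = max ((1 / real m) * (\<Sum>i<m. g (z i)) - \<mu>) 0" for z :: "nat \<Rightarrow> 'x \<times> real"
  have serr: "sample_err \<rho> V f\<rho> m z fs = F z" for z
    unfolding sample_err_def empirical_risk_def F_def g_def \<mu>_def approx_err_def
    by (simp add: sum_subtractf right_diff_distrib)
  define M where "M = PiM {..<m} (\<lambda>_. \<rho>)"
  interpret Mp: prob_space M unfolding M_def by (intro prob_space_PiM P)
  have gm': "(\<lambda>z. g (z i)) \<in> borel_measurable M" if "i \<in> {..<m}" for i
    unfolding M_def using that gm by measurable
  have hm': "(\<lambda>z. h (z i)) \<in> borel_measurable M" if "i \<in> {..<m}" for i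
    unfolding M_def using that hm by measurable
  have Fm [measurable]: "F \<in> borel_measurable M"
  proof -
    have "(\<lambda>z. \<Sum>i<m. g (z i)) \<in> borel_measurable M" using gm' by (intro borel_measurable_sum) auto
    then show ?thesis unfolding F_def by measurable
  qed
  define Hs where "Hs z = (\<Sum>i<m. h (z i))" for z :: "nat \<Rightarrow> 'x \<times> real"
  have Hm [measurable]: "Hs \<in> borel_measurable M"
    unfolding Hs_def using hm' by (intro borel_measurable_sum) auto
  have Gs: "{z \<in> space M. F z \<le> Tb} \<in> sets M" by measurable
  have Bs: "{z \<in> space M. m * t \<le> Hs z} \<in> sets M" by measurable
  have sub: "space M - {z \<in> space M. F z \<le> Tb} \<subseteq> {z \<in> space M. m * t \<le> Hs z}"
  proof safe
    fix z assume z: "z \<in> space M" "\<not> F z \<le> Tb"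
    then have "F z > t" using tTb by simp
    then have gt: "(1 / real m) * (\<Sum>i<m. g (z i)) - \<mu> > t" unfolding F_def using tp by simp
    have "Hs z = (\<Sum>i<m. g (z i)) - m * \<mu>" unfolding Hs_def h_def by (simp add: sum_subtractf)
    also have "\<dots> = m * ((1 / real m) * (\<Sum>i<m. g (z i)) - \<mu>)" using mp by (simp add: field_simps)
    finally have "Hs z = m * ((1 / real m) * (\<Sum>i<m. g (z i)) - \<mu>)" .
    moreover have "m * t \<le> m * ((1 / real m) * (\<Sum>i<m. g (z i)) - \<mu>)"
      using gt mp by (intro mult_left_mono) auto
    ultimately show "m * t \<le> Hs z" by simp
  qed
  have "Mp.prob (space M - {z \<in> space M. F z \<le> Tb}) \<le> Mp.prob {z \<in> space M. m * t \<le> Hs z}"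
    using sub Bs by (rule Mp.finite_measure_mono)
  also have "\<dots> \<le> \<delta> / 2" using badP unfolding M_def Hs_def by simp
  finally have "1 - \<delta> / 2 \<le> Mp.prob {z \<in> space M. F z \<le> Tb}"
    using Mp.prob_compl[OF Gs] by simp
  moreover have "{z \<in> space M. F z \<le> Tb} = {z \<in> space (PiM {..<m} (\<lambda>_. \<rho>)).
           sample_err \<rho> V f\<rho> m z fs
           \<le> (8 * C0 q cq (SUP x. sqrt (K x x)) (SUP x. \<bar>f\<rho> x\<bar>) + 2 * sqrt c\<tau>) * ln (2 / \<delta>) *
              Max {R powr (q + 1) / real m,
                   (R powr (2 + q - \<tau>) / real m) powr (1 / (2 - \<tau>)),
                   approx_err \<rho> V f\<rho> fs}}"
    unfolding serr M_def Tb_def c0_def \<kappa>_def B_def \<epsilon>_def W_def by simp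
  ultimately show ?thesis unfolding M_def by simp
qed

theorem mainTheorem16:
  "\<exists>C1 :: real \<Rightarrow> real \<Rightarrow> real \<Rightarrow> real \<Rightarrow> real.
    (\<forall>q cq \<kappa> B. C1 q cq \<kappa> B > 0) \<and>
    (\<forall>(\<rho> :: ('x::{metric_space,second_countable_topology} \<times> real) measure)
       (Y :: real set) (V :: real \<Rightarrow> real \<Rightarrow> real) (K :: 'x \<Rightarrow> 'x \<Rightarrow> real) (f\<rho> :: 'x \<Rightarrow> real)
       (q :: real) (cq :: real) (\<tau> :: real) (c\<tau> :: real) (R :: real) (fs :: 'x \<Rightarrow> real)
       (m :: nat) (\<delta> :: real).
      \<comment> \<open>setting\<close>
      prob_space \<rho> \<and> sets \<rho> = sets borel \<and> (AE z in \<rho>. snd z \<in> Y) \<and>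
      (\<lambda>(y, a). V y a) \<in> borel_measurable borel \<and>
      (\<forall>y a. V y a \<ge> 0) \<and> (\<forall>y. convex_on UNIV (V y)) \<and>
      risk_minimizer \<rho> V f\<rho> \<and>
      reproducing_kernel K \<and> (\<forall>x. K x \<in> borel_measurable borel) \<and>
      \<comment> \<open>(A1)\<close>
      (\<exists>b. \<forall>x. K x x \<le> b) \<and> (\<exists>b. \<forall>x. \<bar>f\<rho> x\<bar> \<le> b) \<and> (\<exists>b. \<forall>y\<in>Y. V y 0 \<le> b) \<and>
      q \<ge> 0 \<and> cq > 0 \<and>
      (\<forall>a. \<forall>y\<in>Y. \<bar>left_deriv (V y) a\<bar> \<le> cq * (1 + rpow \<bar>a\<bar> q)) \<and>
      \<comment> \<open>(A2)\<close>
      0 \<le> \<tau> \<and> \<tau> \<le> 1 \<and> c\<tau> > 0 \<and>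
      (\<forall>R'\<ge>1. \<forall>f. in_rkhs K f \<and> rkhs_norm K f \<le> R' \<longrightarrow>
         (\<integral>z. (V (snd z) (f (fst z)) - V (snd z) (f\<rho> (fst z)))\<^sup>2 \<partial>\<rho>)
           \<le> c\<tau> * R' powr (2 + q - \<tau>) * rpow (approx_err \<rho> V f\<rho> f) \<tau>) \<and>
      \<comment> \<open>data of the theorem\<close>
      R \<ge> 1 \<and> in_rkhs K fs \<and> rkhs_norm K fs \<le> R \<and> m > 0 \<and> 0 < \<delta> \<and> \<delta> < 1
      \<longrightarrow>
      measure (PiM {..<m} (\<lambda>_. \<rho>))
        {z \<in> space (PiM {..<m} (\<lambda>_. \<rho>)).
           sample_err \<rho> V f\<rho> m z fs
           \<le> (C1 q cq (SUP x. sqrt (K x x)) (SUP x. \<bar>f\<rho> x\<bar>) + 2 * sqrt c\<tau>) * ln (2 / \<delta>) *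
              Max {R powr (q + 1) / real m,
                   (R powr (2 + q - \<tau>) / real m) powr (1 / (2 - \<tau>)),
                   approx_err \<rho> V f\<rho> fs}}
      \<ge> 1 - \<delta> / 2)"
  proof (rule exI[where x="\<lambda>q cq \<kappa> B. 8 * C0 q cq \<kappa> B"], intro conjI allI impI)
  fix q cq \<kappa> B :: real
  show "0 < 8 * C0 q cq \<kappa> B" using C0_pos by simp
next
  fix \<rho> :: "('x::{metric_space,second_countable_topology} \<times> real) measure"
    and Y :: "real set" and V :: "real \<Rightarrow> real \<Rightarrow> real" and K :: "'x \<Rightarrow> 'x \<Rightarrow> real"
    and f\<rho> :: "'x \<Rightarrow> real" and q cq \<tau> c\<tau> R :: real and fs :: "'x \<Rightarrow> real" and m :: nat and \<delta> :: real
  assume H: "prob_space \<rho> \<and> sets \<rho> = sets borel \<and> (AE z in \<rho>. snd z \<in> Y) \<and>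
      (\<lambda>(y, a). V y a) \<in> borel_measurable borel \<and>
      (\<forall>y a. V y a \<ge> 0) \<and> (\<forall>y. convex_on UNIV (V y)) \<and>
      risk_minimizer \<rho> V f\<rho> \<and>
      reproducing_kernel K \<and> (\<forall>x. K x \<in> borel_measurable borel) \<and>
      (\<exists>b. \<forall>x. K x x \<le> b) \<and> (\<exists>b. \<forall>x. \<bar>f\<rho> x\<bar> \<le> b) \<and> (\<exists>b. \<forall>y\<in>Y. V y 0 \<le> b) \<and>
      q \<ge> 0 \<and> cq > 0 \<and>
      (\<forall>a. \<forall>y\<in>Y. \<bar>left_deriv (V y) a\<bar> \<le> cq * (1 + rpow \<bar>a\<bar> q)) \<and>
      0 \<le> \<tau> \<and> \<tau> \<le> 1 \<and> c\<tau> > 0 \<and>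
      (\<forall>R'\<ge>1. \<forall>f. in_rkhs K f \<and> rkhs_norm K f \<le> R' \<longrightarrow>
         (\<integral>z. (V (snd z) (f (fst z)) - V (snd z) (f\<rho> (fst z)))\<^sup>2 \<partial>\<rho>)
           \<le> c\<tau> * R' powr (2 + q - \<tau>) * rpow (approx_err \<rho> V f\<rho> f) \<tau>) \<and>
      R \<ge> 1 \<and> in_rkhs K fs \<and> rkhs_norm K fs \<le> R \<and> m > 0 \<and> 0 < \<delta> \<and> \<delta> < 1"
  then show "measure (PiM {..<m} (\<lambda>_. \<rho>))
        {z \<in> space (PiM {..<m} (\<lambda>_. \<rho>)).
           sample_err \<rho> V f\<rho> m z fs
           \<le> (8 * C0 q cq (SUP x. sqrt (K x x)) (SUP x. \<bar>f\<rho> x\<bar>) + 2 * sqrt c\<tau>) * ln (2 / \<delta>) *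
              Max {R powr (q + 1) / real m,
                   (R powr (2 + q - \<tau>) / real m) powr (1 / (2 - \<tau>)),
                   approx_err \<rho> V f\<rho> fs}}
      \<ge> 1 - \<delta> / 2"
    by (elim conjE) (rule main_core; assumption)
qed

end
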